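(* Let $n\ge1$. There exist constants $C>0$ and $\delta_0>0$ depending only on $n$ such that for every $0<\delta<\delta_0$ the map $\psi$ is defined on $E_\delta$ and every $\psi(h)$, $h\in E_\delta$, lies within operator-norm distance $C\delta$ of some matrix in $SO(n,\mathbb R)$.
   Context: $|\cdot|$ is the operator norm. $E_\delta=\{gp: g\in{\rm Mat}(n,\mathbb R),\ \det g>0,\ p\in GL(n,\mathbb C),\ |p-I|<\delta\}$. For small $\delta$ and $h\in E_\delta$, all eigenvalues of $hh^T$ have positive real part; let $S=\sqrt{hh^T}$ be the principal square root (holomorphic functional calculus with the branch of $\sqrt\lambda$ on $\{{\rm Re}\,\lambda>0\}$ positive for $\lambda>0$), and define $\psi(h)=S^{-1}h=S(h^T)^{-1}$, the complex orthogonal factor of the polar decomposition $h=S\psi(h)$. *)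

theory Defs
  imports "HOL-Analysis.Analysis"
begin

type_synonym 'n cmat = "complex^'n^'n"

definition opnorm :: "'n::finite cmat \<Rightarrow> real" where
  "opnorm M = onorm (\<lambda>x::complex^'n. M *v x)"

definition cplx :: "real^'n^'n \<Rightarrow> 'n::finite cmat" where
  "cplx g = (\<chi> i j. complex_of_real (g $ i $ j))"

definition cmat_eigenvalue :: "'n::finite cmat \<Rightarrow> complex \<Rightarrow> bool" where
  "cmat_eigenvalue A c \<longleftrightarrow> (\<exists>v. v \<noteq> 0 \<and> A *v v = c *s v)"

definition E_set :: "real \<Rightarrow> 'n::finite cmat set" where
  "E_set \<delta> = {cplx g ** p | g p. det g > 0 \<and> invertible p \<and> opnorm (p - mat 1) < \<delta>}"

text \<open>Principal square root: the unique square root all of whose eigenvalues lie in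
  the open right half-plane (this is what the holomorphic functional calculus with the
  principal branch produces when the spectrum lies in the right half-plane).\<close>
definition psqrt :: "'n::finite cmat \<Rightarrow> 'n cmat" where
  "psqrt A = (THE S. S ** S = A \<and> (\<forall>c. cmat_eigenvalue S c \<longrightarrow> Re c > 0))"

definition psi :: "'n::finite cmat \<Rightarrow> 'n cmat" where
  "psi h = matrix_inv (psqrt (h ** transpose h)) ** h"

definition SO_set :: "(real^'n^'n::finite) set" where
  "SO_set = {Q. transpose Q ** Q = mat 1 \<and> det Q = 1}"

end

theory Submission
  imports Defs "HOL-Computational_Algebra.Fundamental_Theorem_Algebra"
begin


lemma norm_sq_vec: "(norm (x::'a::real_normed_vector^'n))^2 = (\<Sum>i\<in>UNIV. (norm (x$i))^2)"
  unfolding norm_vec_def L2_set_def by (simp add: sum_nonneg)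

lemma fro_sq: "(norm (M::complex^'n^'n))^2 = (\<Sum>i\<in>UNIV. \<Sum>j\<in>UNIV. (cmod (M$i$j))^2)"
  by (simp add: norm_sq_vec)

lemma cmod_sum_prod_le:
  fixes a b :: "'n::finite \<Rightarrow> complex"
  shows "(cmod (\<Sum>k\<in>UNIV. a k * b k))^2 \<le> (\<Sum>k\<in>UNIV. (cmod (a k))^2) * (\<Sum>k\<in>UNIV. (cmod (b k))^2)"
proof -
  have "cmod (\<Sum>k\<in>UNIV. a k * b k) \<le> (\<Sum>k\<in>UNIV. \<bar>cmod (a k)\<bar> * \<bar>cmod (b k)\<bar>)"
    by (rule order_trans[OF norm_sum]) (simp add: norm_mult)
  also have "\<dots> \<le> L2_set (\<lambda>k. cmod (a k)) UNIV * L2_set (\<lambda>k. cmod (b k)) UNIV"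
    by (rule L2_set_mult_ineq)
  finally have "(cmod (\<Sum>k\<in>UNIV. a k * b k))^2 \<le> (L2_set (\<lambda>k. cmod (a k)) UNIV * L2_set (\<lambda>k. cmod (b k)) UNIV)^2"
    by (simp add: power_mono)
  also have "\<dots> = (\<Sum>k\<in>UNIV. (cmod (a k))^2) * (\<Sum>k\<in>UNIV. (cmod (b k))^2)"
    unfolding power_mult_distrib L2_set_def by (simp add: sum_nonneg)
  finally show ?thesis .
qed

lemma norm_mv_le: "norm ((A::complex^'n^'m) *v x) \<le> norm A * norm x"
proof -
  have "(norm (A *v x))^2 = (\<Sum>i\<in>UNIV. (cmod (\<Sum>k\<in>UNIV. A$i$k * x$k))^2)"
    by (simp add: norm_sq_vec matrix_vector_mult_def)
  also have "\<dots> \<le> (\<Sum>i\<in>UNIV. (norm (A$i))^2 * (norm x)^2)"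
    apply (rule sum_mono)
    using cmod_sum_prod_le[of "\<lambda>k. A$i$k" "\<lambda>k. x$k" for i] by (simp add: norm_sq_vec)
  also have "\<dots> = (norm A * norm x)^2"
    by (simp add: norm_sq_vec[of A] power_mult_distrib sum_distrib_right)
  finally show ?thesis
    by (meson mult_nonneg_nonneg norm_ge_zero power2_le_imp_le)
qed

lemma fro_sq_cols: "(norm (M::complex^'n^'m))^2 = (\<Sum>j\<in>UNIV. (norm (column j M))^2)"
  unfolding norm_sq_vec column_def by (simp add: norm_sq_vec) (rule sum.swap)

lemma column_mult: "column j (A ** B) = A *v column j B"
  by (simp add: column_def matrix_matrix_mult_def matrix_vector_mult_def vec_eq_iff)

lemma norm_mm_le: "norm ((A::complex^'n^'m) ** (B::complex^'k^'n)) \<le> norm A * norm B"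
proof -
  have "(norm (A ** B))^2 = (\<Sum>j\<in>UNIV. (norm (A *v column j B))^2)"
    by (simp add: fro_sq_cols column_mult)
  also have "\<dots> \<le> (\<Sum>j\<in>UNIV. (norm A)^2 * (norm (column j B))^2)"
    by (rule sum_mono) (metis norm_ge_zero norm_mv_le power_mono power_mult_distrib)
  also have "\<dots> = (norm A * norm B)^2"
    by (simp add: fro_sq_cols[of B] power_mult_distrib sum_distrib_left)
  finally show ?thesis
    by (meson mult_nonneg_nonneg norm_ge_zero power2_le_imp_le)
qed

lemma norm_transpose_c: "norm (transpose (A::complex^'n^'n)) = norm A"
proof -
  have "(norm (transpose A))^2 = (norm A)^2"
    unfolding norm_sq_vec transpose_def by (simp add: norm_sq_vec) (rule sum.swap)
  then show ?thesis by (simp add: power2_eq_iff_nonneg)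
qed

lemma norm_mat1: "norm (mat 1 :: complex^'n^'n) = sqrt (real CARD('n))"
proof -
  have "(norm (mat 1 :: complex^'n^'n))^2 = real CARD('n)"
    by (simp add: norm_sq_vec mat_def if_distrib[of "\<lambda>x. (cmod x)^2"] sum.delta cong: if_cong)
  then show ?thesis by (metis norm_ge_zero real_sqrt_unique)
qed

lemma norm_entry_mono:
  assumes "\<And>i j. cmod ((A::complex^'n^'m)$i$j) \<le> cmod ((B::complex^'n^'m)$i$j)"
  shows "norm A \<le> norm B"
proof -
  have "(norm A)^2 \<le> (norm B)^2"
    by (simp add: norm_sq_vec) (intro sum_mono power_mono assms; simp)
  then show ?thesis by (simp add: power2_le_iff_abs_le)
qed



lemma sym_inner:
  fixes A :: "real^'n^'n" assumes "transpose A = A"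
  shows "(A *v x) \<bullet> y = x \<bullet> (A *v y)"
proof -
  have "A *v x = x v* A" by (metis assms transpose_matrix_vector)
  then show ?thesis by (simp add: dot_lmul_matrix)
qed

lemma quad_nonpos_zero:
  fixes a b :: real
  assumes "\<And>t. 2*t*a + t^2*b \<le> 0" "a \<ge> 0"
  shows "a = 0"
proof (rule ccontr)
  assume "a \<noteq> 0" then have a: "a > 0" using assms(2) by simp
  define t where "t = a / (\<bar>b\<bar> + 1)"
  have t: "t > 0" using a by (simp add: t_def)
  have "t * \<bar>b\<bar> \<le> a" using a by (simp add: t_def field_simps)
  then have "t^2 * \<bar>b\<bar> \<le> t * a" using t by (simp add: power2_eq_square)
  moreover have "t^2 * (- \<bar>b\<bar>) \<le> t^2 * b" by (rule mult_left_mono) simp_all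
  ultimately have "2*t*a + t^2*b \<ge> t * a" by linarith
  moreover have "t * a > 0" using t a by simp
  ultimately show False using assms(1)[of t] by linarith
qed

lemma sym_eig_step:
  fixes A :: "real^'n^'n"
  assumes sym: "transpose A = A"
    and S: "finite S" "card S < CARD('n)" "pairwise orthogonal S"
    and eig: "\<forall>x\<in>S. norm x = 1 \<and> A *v x = (x \<bullet> (A *v x)) *\<^sub>R x"
  obtains v where "norm v = 1" "\<forall>s\<in>S. orthogonal s v" "A *v v = (v \<bullet> (A *v v)) *\<^sub>R v"
proof -
  define T where "T = {x. \<forall>s\<in>S. orthogonal s x}"
  have subT: "subspace T"
    unfolding T_def subspace_def orthogonal_def by (auto simp: inner_add_right)
  have invT: "A *v x \<in> T" if "x \<in> T" for x
  proof -
    { fix s assume s: "s \<in> S"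
      then have "A *v s = (s \<bullet> (A *v s)) *\<^sub>R s" using eig by auto
      then have "s \<bullet> (A *v x) = (s \<bullet> (A *v s)) * (s \<bullet> x)"
        by (metis sym sym_inner inner_scaleR_left)
      then have "orthogonal s (A *v x)" using that s by (simp add: T_def orthogonal_def) }
    then show ?thesis by (simp add: T_def)
  qed
  have "dim S < DIM(real^'n)"
    using S by (metis DIM_cart DIM_real dim_le_card' le_less_trans mult.right_neutral)
  then obtain x0 where x0: "x0 \<noteq> 0" "\<And>y. y \<in> span S \<Longrightarrow> orthogonal x0 y"
    using orthogonal_to_subspace_exists by blast
  define K where "K = T \<inter> sphere 0 1"
  have "x0 /\<^sub>R norm x0 \<in> K"
    using x0 by (auto simp: K_def T_def orthogonal_def span_base inner_commute)
  then have Kne: "K \<noteq> {}" by auto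
  have "T = (\<Inter>s\<in>S. {x. s \<bullet> x = 0})" by (auto simp: T_def orthogonal_def)
  then have "closed T" by (simp add: closed_INT closed_hyperplane)
  then have cK: "compact K" unfolding K_def by (simp add: compact_Int_closed closed_Int_compact)
  have "continuous_on K (\<lambda>x. x \<bullet> (A *v x))"
    by (intro continuous_intros continuous_on_id linear_continuous_on matrix_vector_mul_bounded_linear)
  then obtain v where vK: "v \<in> K" and vmax: "\<And>y. y \<in> K \<Longrightarrow> y \<bullet> (A *v y) \<le> v \<bullet> (A *v v)"
    using continuous_attains_sup[OF cK Kne] by blast
  define l where "l = v \<bullet> (A *v v)"
  define w where "w = A *v v - l *\<^sub>R v"
  have vT: "v \<in> T" and nv: "norm v = 1" using vK by (auto simp: K_def)
  have vv: "v \<bullet> v = 1" using nv by (simp add: norm_eq_1)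
  have wT: "w \<in> T" unfolding w_def using invT[OF vT] vT subT by (simp add: subspace_diff subspace_scale)
  have wv: "w \<bullet> v = 0" unfolding w_def l_def by (simp add: inner_diff_left inner_diff_right vv inner_commute)
  have wAv: "w \<bullet> (A *v v) = w \<bullet> w"
  proof -
    have "w \<bullet> w = w \<bullet> (A *v v) - l * (w \<bullet> v)"
      by (metis w_def inner_diff_right inner_scaleR_right)
    then show ?thesis using wv by simp
  qed
  have vw: "v \<bullet> w = 0" using wv by (simp add: inner_commute)
  have key: "2*t*(w \<bullet> w) + t^2*((w \<bullet> (A *v w)) - l * (w \<bullet> w)) \<le> 0" for t
  proof -
    define y where "y = v + t *\<^sub>R w"
    have yT: "y \<in> T" unfolding y_def using vT wT subT by (simp add: subspace_add subspace_scale)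
    have yy: "y \<bullet> y = 1 + t^2 * (w \<bullet> w)"
      unfolding y_def by (simp add: inner_add_left inner_add_right vv wv vw power2_eq_square)
    then have ny: "norm y ^2 = 1 + t^2 * (w \<bullet> w)" by (simp add: power2_norm_eq_inner)
    have ypos: "norm y > 0" using ny by (metis add_pos_nonneg inner_ge_zero mult_nonneg_nonneg zero_less_one zero_less_power2 zero_le_power2 norm_eq_zero norm_ge_zero order.not_eq_order_implies_strict power_zero_numeral)
    have "y /\<^sub>R norm y \<in> K" using yT ypos subT by (auto simp: K_def subspace_scale)
    from vmax[OF this] have "(y \<bullet> (A *v y)) / (norm y)^2 \<le> l"
      by (simp add: l_def matrix_vector_mult_scaleR power2_eq_square divide_inverse mult.commute mult.left_commute)
    then have "y \<bullet> (A *v y) \<le> l * (norm y)^2" using ypos by (simp add: divide_le_eq mult.commute)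
    moreover have "y \<bullet> (A *v y) = l + 2*t*(w \<bullet> w) + t^2 * (w \<bullet> (A *v w))"
    proof -
      have "v \<bullet> (A *v w) = w \<bullet> (A *v v)" by (metis sym sym_inner inner_commute)
      then show ?thesis unfolding y_def
        by (simp add: matrix_vector_right_distrib matrix_vector_mult_scaleR inner_add_left inner_add_right
            l_def wAv inner_commute power2_eq_square algebra_simps)
    qed
    ultimately show ?thesis using ny by (simp add: algebra_simps)
  qed
  have "w \<bullet> w = 0"
    by (rule quad_nonpos_zero[OF key]) simp
  then have "w = 0" by simp
  then have "A *v v = l *\<^sub>R v" by (simp add: w_def)
  then show ?thesis using that nv vT by (simp add: T_def l_def)
qed



definition diagm :: "('n::finite \<Rightarrow> 'a::zero) \<Rightarrow> 'a^'n^'n" where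
  "diagm d = (\<chi> i j. if i = j then d i else 0)"

lemma diagm_mult: "diagm a ** diagm b = diagm (\<lambda>i. a i * (b i :: 'a::semiring_1))"
  by (simp add: diagm_def matrix_matrix_mult_def vec_eq_iff if_distrib[of "\<lambda>x. x * _"] sum.delta cong: if_cong)

lemma diagm_one: "diagm (\<lambda>i. 1) = (mat 1 :: 'a::semiring_1^'n^'n)"
  by (simp add: diagm_def mat_def)

lemma transpose_diagm[simp]: "transpose (diagm d) = diagm d"
  by (simp add: diagm_def transpose_def vec_eq_iff)

lemma sym_eigbasis:
  fixes A :: "real^'n^'n"
  assumes sym: "transpose A = A"
  shows "k \<le> CARD('n) \<Longrightarrow> \<exists>S. finite S \<and> card S = k \<and> pairwise orthogonal S \<and>
          (\<forall>x\<in>S. norm x = 1 \<and> A *v x = (x \<bullet> (A *v x)) *\<^sub>R x)"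
proof (induction k)
  case 0
  then show ?case by (intro exI[of _ "{}"]) auto
next
  case (Suc k)
  then obtain S where S: "finite S" "card S = k" "pairwise orthogonal S"
    "\<forall>x\<in>S. norm x = 1 \<and> A *v x = (x \<bullet> (A *v x)) *\<^sub>R x" by auto
  then obtain v where v: "norm v = 1" "\<forall>s\<in>S. orthogonal s v" "A *v v = (v \<bullet> (A *v v)) *\<^sub>R v"
    using sym_eig_step[OF sym, of S] Suc.prems by auto
  have "v \<notin> S"
  proof
    assume "v \<in> S" then have "orthogonal v v" using v by auto
    then show False using v(1) by (simp add: orthogonal_def)
  qed
  show ?case
    apply (intro exI[of _ "insert v S"])
    using S v \<open>v \<notin> S\<close> by (auto simp: pairwise_insert orthogonal_commute)
qed

lemma spectral:
  fixes A :: "real^'n^'n"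
  assumes sym: "transpose A = A"
  obtains U d where "transpose U ** (U::real^'n^'n) = mat 1" "U ** transpose U = mat 1"
    "A = U ** diagm d ** transpose U" "\<And>j. norm (column j U) = 1"
    "\<And>j. d j = column j U \<bullet> (A *v column j U)"
proof -
  obtain S where S: "finite S" "card S = CARD('n)" "pairwise orthogonal S"
    "\<forall>x\<in>S. norm x = 1 \<and> A *v x = (x \<bullet> (A *v x)) *\<^sub>R x"
    using sym_eigbasis[OF sym, of "CARD('n)"] by auto
  obtain f where f: "bij_betw f (UNIV::'n set) S"
    by (metis S(1,2) finite_class.finite_UNIV finite_same_card_bij)
  have fS: "f j \<in> S" for j using f by (auto simp: bij_betw_def)
  have fo: "i \<noteq> j \<Longrightarrow> orthogonal (f i) (f j)" for i j
    using S(3) f by (auto simp: pairwise_def bij_betw_def inj_on_def)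
  define U where "U = (\<chi> i j. f j $ i)"
  have colU: "column j U = f j" for j by (simp add: U_def column_def)
  have oU: "orthogonal_matrix U"
    unfolding orthogonal_matrix_orthonormal_columns colU using fS S(4) fo by auto
  define d where "d j = f j \<bullet> (A *v f j)" for j
  have "A ** U = U ** diagm d"
  proof -
    have "(A ** U) $ i $ j = (U ** diagm d) $ i $ j" for i j
    proof -
      have "(A ** U) $ i $ j = (A *v f j) $ i"
        by (simp add: matrix_matrix_mult_def matrix_vector_mult_def U_def)
      also have "\<dots> = d j * f j $ i"
      proof -
        have "A *v f j = d j *\<^sub>R f j" using S(4) fS[of j] unfolding d_def by blast
        then show ?thesis by simp
      qed
      also have "\<dots> = (U ** diagm d) $ i $ j"
        by (simp add: matrix_matrix_mult_def diagm_def U_def if_distrib[of "\<lambda>x. _ * x"] sum.delta cong: if_cong)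
      finally show ?thesis .
    qed
    then show ?thesis by (simp add: vec_eq_iff)
  qed
  then have Aeq: "A = U ** diagm d ** transpose U"
  proof -
    assume AU: "A ** U = U ** diagm d"
    have UUt: "U ** transpose U = mat 1" using oU orthogonal_matrix_def by blast
    have "A = A ** (U ** transpose U)" by (simp only: UUt matrix_mul_rid)
    also have "\<dots> = (A ** U) ** transpose U" by (simp add: matrix_mul_assoc)
    finally show ?thesis using AU by simp
  qed
  have o1: "transpose U ** U = mat 1" and o2: "U ** transpose U = mat 1"
    using oU orthogonal_matrix_def by blast+
  have n1: "norm (column j U) = 1" for j using S(4) fS[of j] colU by simp
  have d1: "d j = column j U \<bullet> (A *v column j U)" for j by (simp add: colU d_def)
  show ?thesis
    apply (rule that[of U d])
    using o1 o2 Aeq n1 d1 by auto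
qed

lemma inner_mv_transpose: "(x::real^'n) \<bullet> (g *v y) = (transpose g *v x) \<bullet> y"
  by (simp add: dot_lmul_matrix)

lemma svd:
  fixes g :: "real^'n^'n"
  assumes "invertible g"
  obtains U s Vt where "transpose U ** (U::real^'n^'n) = mat 1" "U ** transpose U = mat 1"
    "Vt ** transpose (Vt::real^'n^'n) = mat 1" "transpose Vt ** Vt = mat 1" "\<And>j. s j > 0"
    "g = U ** diagm s ** Vt"
proof -
  define A where "A = g ** transpose g"
  have sym: "transpose A = A" by (simp add: A_def matrix_transpose_mul)
  obtain U d where U: "transpose U ** (U::real^'n^'n) = mat 1" "U ** transpose U = mat 1"
    "A = U ** diagm d ** transpose U" "\<And>j. norm (column j U) = 1"
    "\<And>j. d j = column j U \<bullet> (A *v column j U)"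
    by (rule spectral[OF sym]) (rule that)
  have inj: "transpose g *v x = 0 \<Longrightarrow> x = 0" for x
    using assms transpose_invertible matrix_left_invertible_ker invertible_left_inverse by blast
  have dpos: "d j > 0" for j
  proof -
    let ?c = "column j U"
    have "d j = (transpose g *v ?c) \<bullet> (transpose g *v ?c)"
      using U(5)[of j] by (simp add: A_def matrix_vector_mul_assoc[symmetric] inner_mv_transpose)
    moreover have "transpose g *v ?c \<noteq> 0" using inj U(4)[of j] by force
    ultimately show ?thesis by simp
  qed
  define s where "s j = sqrt (d j)" for j
  have spos: "s j > 0" for j using dpos by (simp add: s_def)
  define Vt where "Vt = diagm (\<lambda>j. 1 / s j) ** transpose U ** g"
  have "(\<lambda>i. s i * (1 / s i)) = (\<lambda>i. 1)"
  proof (rule ext)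
    fix i show "s i * (1 / s i) = 1" using spos[of i] by simp
  qed
  then have "diagm s ** diagm (\<lambda>j. 1 / s j) = mat 1"
    by (simp only: diagm_mult diagm_one)
  then have g: "g = U ** diagm s ** Vt"
    unfolding Vt_def using U(2) by (metis matrix_mul_assoc matrix_mul_lid)
  have "Vt ** transpose Vt = diagm (\<lambda>j. 1 / s j) ** (transpose U ** A ** U) ** diagm (\<lambda>j. 1 / s j)"
    unfolding Vt_def A_def by (simp add: matrix_transpose_mul matrix_mul_assoc)
  also have "transpose U ** A ** U = diagm d"
    using U(1,3) by (metis matrix_mul_assoc matrix_mul_lid matrix_mul_rid)
  also have "diagm (\<lambda>j. 1 / s j) ** diagm d ** diagm (\<lambda>j. 1 / s j) = mat 1"
  proof -
    have "(\<lambda>j. (1 / s j) * d j * (1 / s j)) = (\<lambda>j. 1)"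
    proof (rule ext)
      fix j show "(1 / s j) * d j * (1 / s j) = 1" using dpos[of j] by (simp add: s_def)
    qed
    then show ?thesis by (simp only: diagm_mult diagm_one)
  qed
  finally have V1: "Vt ** transpose Vt = mat 1" .
  then have V2: "transpose Vt ** Vt = mat 1" using matrix_left_right_inverse by blast
  show ?thesis using that U(1,2) V1 V2 spos g by blast
qed



lemma mm_add_r: "((A::'a::semiring_1^'n^'m) + B) ** C = A ** C + B ** C"
  by (simp add: matrix_matrix_mult_def vec_eq_iff sum.distrib distrib_right)
lemma mm_diff_l: "(A::'a::ring_1^'n^'m) ** (B - C) = A ** B - A ** C"
  by (simp add: matrix_matrix_mult_def vec_eq_iff sum_subtractf right_diff_distrib)
lemma mm_diff_r: "((A::'a::ring_1^'n^'m) - B) ** C = A ** C - B ** C"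
  by (simp add: matrix_matrix_mult_def vec_eq_iff sum_subtractf left_diff_distrib)
lemma mm_neg_r: "(A::'a::ring_1^'n^'m) ** (- B) = - (A ** B)"
  by (simp add: matrix_matrix_mult_def vec_eq_iff sum_negf)
lemma mm_neg_l: "(- (A::'a::ring_1^'n^'m)) ** B = - (A ** B)"
  by (simp add: matrix_matrix_mult_def vec_eq_iff sum_negf)
lemma mat_comm: "mat c ** M = M ** (mat c :: 'a::comm_semiring_1^'n^'n)"
  by (simp add: matrix_matrix_mult_def mat_def vec_eq_iff if_distrib if_distribR mult.commute
      sum.delta sum.delta' cong: if_cong)
lemma mat_mult_entry: "(mat c ** M) $ i $ j = c * (M $ i $ j :: 'a::comm_semiring_1)"
  by (simp add: matrix_matrix_mult_def mat_def if_distrib if_distribR sum.delta cong: if_cong)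
lemma mat_mat: "mat a ** mat b = (mat (a * b) :: 'a::comm_semiring_1^'n^'n)"
  by (simp add: vec_eq_iff mat_mult_entry) (simp add: mat_def)
lemma mat_add: "mat (a + b) = (mat a + mat b :: 'a::semiring_1^'n^'n)"
  by (simp add: mat_def vec_eq_iff)

definition peval :: "complex poly \<Rightarrow> complex^'n^'n \<Rightarrow> complex^'n^'n" where
  "peval q A = fold_coeffs (\<lambda>a M. mat a + A ** M) q 0"

lemma peval_0[simp]: "peval 0 A = 0" by (simp add: peval_def)

lemma peval_pCons: "peval (pCons a p) A = mat a + A ** peval p A"
proof (cases "a = 0 \<and> p = 0")
  case True then show ?thesis by (simp add: peval_def)
next
  case False
  then show ?thesis unfolding peval_def
    by (auto simp: fold_coeffs_pCons_coeff_not_0_eq fold_coeffs_pCons_not_0_0_eq)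
qed

lemma peval_add: "peval (p + q) A = peval p A + peval q A"
proof (induction p q rule: poly_induct2)
  case 0 then show ?case by simp
next
  case (pCons a p b q)
  then show ?case by (simp add: peval_pCons mat_add matrix_add_ldistrib algebra_simps)
qed

lemma peval_smult: "peval (smult c p) A = mat c ** peval p A"
proof (induction p)
  case 0 then show ?case by simp
next
  case (pCons a p)
  have "mat c ** (mat a + A ** peval p A) = mat c ** mat a + (mat c ** A) ** peval p A"
    by (simp only: matrix_add_ldistrib matrix_mul_assoc)
  also have "\<dots> = mat (c * a) + (A ** mat c) ** peval p A"
    by (simp only: mat_mat mat_comm[of c A])
  also have "\<dots> = mat (c * a) + A ** (mat c ** peval p A)"
    by (simp only: matrix_mul_assoc)
  finally have "mat c ** (mat a + A ** peval p A) = mat (c * a) + A ** (mat c ** peval p A)" .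
  then show ?case using pCons by (simp add: peval_pCons)
qed

lemma peval_mult: "peval (p * q) A = peval p A ** peval q A"
proof (induction p)
  case 0 then show ?case by simp
next
  case (pCons a p)
  show ?case using pCons
    by (simp add: peval_add peval_smult peval_pCons mm_add_r matrix_mul_assoc)
qed

lemma peval_const: "peval [:c:] A = mat c" by (simp add: peval_pCons)

lemma peval_lin: "peval [:-\<mu>, 1:] A = A - mat \<mu>"
proof -
  have "peval [:-\<mu>, 1:] A = mat (-\<mu>) + A" by (simp add: peval_pCons)
  also have "\<dots> = A - mat \<mu>" by (simp add: mat_def vec_eq_iff)
  finally show ?thesis .
qed

lemma mat_mv: "mat c *v v = c *s (v::'a::comm_semiring_1^'n)"
  unfolding mat_def matrix_vector_mult_def
  by (auto simp: vec_eq_iff if_distrib if_distribR sum.delta'[OF finite] cong: if_cong)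

lemma eig_iff_sing: "cmat_eigenvalue A c \<longleftrightarrow> (\<exists>v. v \<noteq> 0 \<and> (A - mat c) *v v = 0)"
proof -
  have "(A - mat c) *v v = A *v v - c *s v" for v
    by (simp only: matrix_vector_mult_diff_rdistrib mat_mv)
  then show ?thesis unfolding cmat_eigenvalue_def by auto
qed

lemma sing_transpose:
  fixes N :: "'a::field^'n^'n"
  shows "(\<exists>v. v \<noteq> 0 \<and> N *v v = 0) \<longleftrightarrow> (\<exists>v. v \<noteq> 0 \<and> transpose N *v v = 0)"
proof -
  have inv_t: "invertible (transpose M)" if inv: "invertible M" for M :: "'a^'n^'n"
  proof -
    obtain M' :: "'a^'n^'n" where "M ** M' = mat 1" using inv unfolding invertible_def by blast
    then have "transpose M' ** transpose M = mat 1" by (metis matrix_transpose_mul transpose_mat)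
    then show ?thesis using invertible_left_inverse by blast
  qed
  have k: "(\<exists>v. v \<noteq> 0 \<and> M *v v = 0) \<longleftrightarrow> \<not> invertible M" for M :: "'a^'n^'n"
  proof -
    have "invertible M \<longleftrightarrow> (\<forall>x. M *v x = 0 \<longrightarrow> x = 0)"
      by (simp only: invertible_left_inverse matrix_left_invertible_ker)
    then show ?thesis by auto
  qed
  show ?thesis unfolding k using inv_t[of N] inv_t[of "transpose N"] by auto
qed

lemma eig_transpose: "cmat_eigenvalue (transpose A) c \<longleftrightarrow> cmat_eigenvalue A c"
proof -
  have "transpose A - mat c = transpose (A - mat c)"
    by (simp add: transpose_def mat_def vec_eq_iff)
  then show ?thesis unfolding eig_iff_sing using sing_transpose[of "A - mat c"] by simp
qed

lemma sylvester_poly: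
  fixes A B :: "complex^'n^'n"
  assumes disj: "\<And>\<mu>. cmat_eigenvalue A \<mu> \<Longrightarrow> cmat_eigenvalue B \<mu> \<Longrightarrow> False"
  shows "q \<noteq> 0 \<Longrightarrow> A ** Y = Y ** B \<Longrightarrow> peval q A ** Y = 0 \<Longrightarrow> Y = 0"
proof (induction "degree q" arbitrary: q Y rule: less_induct)
  case less
  show ?case
  proof (cases "degree q = 0")
    case True
    then obtain c where q: "q = [:c:]" by (metis degree_eq_zeroE)
    then have "c \<noteq> 0" using less.prems by simp
    moreover have "c * Y $ i $ j = 0" for i j
      using less.prems(3) q by (metis mat_mult_entry peval_const zero_index)
    ultimately show ?thesis by (simp add: vec_eq_iff)
  next
    case False
    then have "\<not> constant (poly q)" by (simp add: constant_degree)
    then obtain \<mu> where "poly q \<mu> = 0" using fundamental_theorem_of_algebra by blast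
    then obtain r where qr: "q = [:-\<mu>, 1:] * r" by (metis poly_eq_0_iff_dvd dvdE)
    have r0: "r \<noteq> 0" using qr less.prems(1) by auto
    have l0: "[:-\<mu>, 1:] \<noteq> (0::complex poly)" by simp
    have "degree q = degree [:-\<mu>, 1:] + degree r" by (simp only: qr degree_mult_eq[OF l0 r0])
    then have dr: "degree r < degree q" by simp
    define Y' where "Y' = (A - mat \<mu>) ** Y"
    have "q = r * [:-\<mu>, 1:]" using qr by (simp only: mult.commute)
    then have "peval q A = peval r A ** (A - mat \<mu>)"
      by (simp only: peval_mult peval_lin)
    then have "peval r A ** Y' = 0" using less.prems(3) by (simp add: Y'_def matrix_mul_assoc)
    moreover have "A ** Y' = Y' ** B"
      unfolding Y'_def using less.prems(2)
      by (simp add: mm_diff_l mm_diff_r matrix_mul_assoc mat_comm)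
         (metis matrix_mul_assoc mat_comm)
    ultimately have "Y' = 0" using less.hyps[OF dr r0] by blast
    then have AY: "A ** Y = mat \<mu> ** Y" by (simp add: Y'_def mm_diff_r)
    then have YB: "Y ** B = mat \<mu> ** Y" using less.prems(2) by simp
    show "Y = 0"
    proof (rule ccontr)
      assume "Y \<noteq> 0"
      then obtain i j where ij: "Y $ i $ j \<noteq> 0" by (metis vec_eq_iff zero_index)
      have c1: "column j Y \<noteq> 0" using ij by (metis column_def vec_lambda_beta zero_index)
      have "A *v column j Y = \<mu> *s column j Y"
      proof -
        have "(A *v column j Y) $ k = (A ** Y) $ k $ j" for k
          by (simp add: matrix_vector_mult_def matrix_matrix_mult_def column_def)
        then show ?thesis using AY by (simp add: vec_eq_iff mat_mult_entry column_def)
      qed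
      then have e1: "cmat_eigenvalue A \<mu>" using c1 cmat_eigenvalue_def by blast
      have r1: "row i Y \<noteq> 0" using ij by (metis row_def vec_lambda_beta zero_index)
      have "transpose B *v row i Y = \<mu> *s row i Y"
      proof -
        have "(Y ** B) $ i $ k = \<mu> * Y $ i $ k" for k using YB by (simp add: mat_mult_entry)
        then show ?thesis
          by (simp add: vec_eq_iff row_def matrix_vector_mult_def transpose_def matrix_matrix_mult_def mult.commute)
      qed
      then have "cmat_eigenvalue (transpose B) \<mu>" using r1 cmat_eigenvalue_def by blast
      then have "cmat_eigenvalue B \<mu>" by (simp add: eig_transpose)
      then show False using disj e1 by blast
    qed
  qed
qed



lemma peval_diff: "peval (p - q) A = peval p A - peval q A"
proof -
  have "peval p A = peval ((p - q) + q) A" by simp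
  also have "\<dots> = peval (p - q) A + peval q A" by (rule peval_add)
  finally show ?thesis by simp
qed

lemma peval_sum: "finite S \<Longrightarrow> peval (\<Sum>x\<in>S. f x) A = (\<Sum>x\<in>S. peval (f x) A)"
  by (induction S rule: finite_induct) (simp_all add: peval_add)

lemma mat_of_real_mult: "mat (complex_of_real r) ** M = r *\<^sub>R (M::complex^'n^'n)"
  by (simp add: vec_eq_iff mat_mult_entry) (simp add: complex_eq_iff)

lemma peval_monom: "peval (monom c i) A = mat c ** peval (monom 1 i) A"
proof -
  have "monom c i = smult c (monom 1 i)" by (simp add: smult_monom)
  then show ?thesis by (simp only: peval_smult)
qed

lemma annih: "\<exists>q. q \<noteq> 0 \<and> peval q (A::complex^'n^'n) = 0"
proof -
  define P where "P i = peval (monom 1 i) A" for i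
  define m where "m = DIM(complex^'n^'n)"
  show ?thesis
  proof (cases "inj_on P {..m}")
    case False
    then obtain i j where ij: "i \<noteq> j" "P i = P j" by (auto simp: inj_on_def)
    define q where "q = monom (1::complex) i - monom 1 j"
    have "coeff q i = 1" using ij by (simp add: q_def coeff_monom)
    then have "q \<noteq> 0" by auto
    moreover have "peval q A = 0" using ij by (simp add: q_def peval_diff P_def)
    ultimately show ?thesis by blast
  next
    case True
    define S where "S = P ` {..m}"
    have "card S = Suc m" using True by (simp add: S_def card_image)
    then have "dependent S"
    proof -
      assume c: "card S = Suc m"
      show "dependent S"
      proof (rule ccontr)
        assume "\<not> dependent S"
        then have "card S \<le> m" using independent_bound[of S] by (simp add: m_def)
        then show False using c by simp
      qed
    qed
    moreover have fS: "finite S" by (simp add: S_def)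
    ultimately obtain u where u: "\<exists>v\<in>S. u v \<noteq> 0" "(\<Sum>v\<in>S. u v *\<^sub>R v) = 0"
      using real_vector.dependent_finite by blast
    define q where "q = (\<Sum>i\<le>m. monom (complex_of_real (u (P i))) i)"
    have "peval q A = (\<Sum>i\<le>m. u (P i) *\<^sub>R P i)"
    proof -
      have pm: "peval (monom c i) A = mat c ** P i" for c i unfolding P_def by (rule peval_monom)
      show ?thesis unfolding q_def by (simp only: peval_sum[OF finite_atMost] pm mat_of_real_mult)
    qed
    also have "\<dots> = (\<Sum>v\<in>S. u v *\<^sub>R v)"
      unfolding S_def by (simp add: sum.reindex[OF True])
    finally have "peval q A = 0" using u(2) by simp
    moreover have "q \<noteq> 0"
    proof -
      obtain k where k: "k \<le> m" "u (P k) \<noteq> 0" using u(1) by (auto simp: S_def)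
      have "coeff q k = complex_of_real (u (P k))"
        using k(1) by (simp add: q_def coeff_sum coeff_monom)
      then show ?thesis using k(2) by auto
    qed
    ultimately show ?thesis by blast
  qed
qed

lemma sqrt_unique:
  fixes S1 S2 :: "complex^'n^'n"
  assumes eq: "S1 ** S1 = S2 ** S2"
    and p1: "\<And>c. cmat_eigenvalue S1 c \<Longrightarrow> Re c > 0"
    and p2: "\<And>c. cmat_eigenvalue S2 c \<Longrightarrow> Re c > 0"
  shows "S1 = S2"
proof -
  obtain q where q: "q \<noteq> 0" "peval q S1 = 0" using annih by blast
  have disj: False if e1: "cmat_eigenvalue S1 \<mu>" and e2: "cmat_eigenvalue (- S2) \<mu>" for \<mu>
  proof -
    obtain v where v: "v \<noteq> 0" "(- S2) *v v = \<mu> *s v" using e2 cmat_eigenvalue_def by blast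
    have "S2 *v v = (- \<mu>) *s v"
    proof -
      have "(- S2) *v v = - (S2 *v v)" by (simp add: vec_eq_iff matrix_vector_mult_def sum_negf)
      then show ?thesis using v(2) by (simp add: vec_eq_iff)
    qed
    then have "cmat_eigenvalue S2 (- \<mu>)" using v(1) cmat_eigenvalue_def by blast
    then show False using p1[OF e1] p2 by fastforce
  qed
  have "S1 ** (S1 - S2) = (S1 - S2) ** (- S2)"
    by (simp add: mm_diff_l mm_diff_r mm_neg_r eq)
  moreover have "peval q S1 ** (S1 - S2) = 0" using q by simp
  ultimately have "S1 - S2 = 0" using sylvester_poly[of S1 "- S2" q "S1 - S2"] disj q(1) by blast
  then show ?thesis by simp
qed

lemma psqrt_eq:
  assumes "S ** S = M" "\<And>c. cmat_eigenvalue S c \<Longrightarrow> Re c > 0"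
  shows "psqrt M = S"
  unfolding psqrt_def
proof (rule the_equality)
  show "S ** S = M \<and> (\<forall>c. cmat_eigenvalue S c \<longrightarrow> 0 < Re c)" using assms by blast
  fix S' assume "S' ** S' = M \<and> (\<forall>c. cmat_eigenvalue S' c \<longrightarrow> 0 < Re c)"
  then show "S' = S" using sqrt_unique[of S' S] assms by auto
qed



lemma transpose_add: "transpose (A + B) = transpose A + (transpose B :: 'a::plus^'n^'n)"
  by (simp add: transpose_def vec_eq_iff)
lemma transpose_diff: "transpose (A - B) = transpose A - (transpose B :: 'a::minus^'n^'n)"
  by (simp add: transpose_def vec_eq_iff)
lemma transpose_entry: "transpose A $ i $ j = A $ j $ i"
  by (simp add: transpose_def)

lemma cplx_diag_entry: "(cplx (diagm d) ** M) $ i $ j = complex_of_real (d i) * M $ i $ j"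
  unfolding cplx_def diagm_def matrix_matrix_mult_def
  by (auto simp: if_distrib if_distribR sum.delta'[OF finite] cong: if_cong)

definition Kop :: "('n::finite \<Rightarrow> real) \<Rightarrow> complex^'n^'n \<Rightarrow> complex^'n^'n" where
  "Kop d Y = (\<chi> i j. complex_of_real (d j / (d i + d j)) * Y $ i $ j)"

lemma Kop_norm:
  assumes "\<And>i. d i > 0" shows "norm (Kop d Y) \<le> norm Y"
proof (rule norm_entry_mono)
  fix i j
  have "0 \<le> d j / (d i + d j)" "d j / (d i + d j) \<le> 1"
    using assms[of i] assms[of j] by (simp_all add: divide_le_eq)
  moreover have "cmod (Kop d Y $ i $ j) = \<bar>d j / (d i + d j)\<bar> * cmod (Y $ i $ j)"
    unfolding Kop_def by (simp only: vec_lambda_beta norm_mult norm_of_real)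
  ultimately show "cmod (Kop d Y $ i $ j) \<le> cmod (Y $ i $ j)"
    by (metis abs_of_nonneg mult_left_le_one_le norm_ge_zero)
qed

lemma Kop_diff: "Kop d Y1 - Kop d Y2 = Kop d (Y1 - Y2)"
  by (simp add: Kop_def vec_eq_iff right_diff_distrib)

lemma fixpt_W:
  fixes d :: "'n::finite \<Rightarrow> real" and E :: "complex^'n^'n"
  assumes dpos: "\<And>i. d i > 0" and Esym: "transpose E = E" and Esmall: "norm E \<le> 1/8"
  obtains W where "cplx (diagm d) ** W = transpose (cplx (diagm d) ** W)"
    "W ** transpose W = mat 1 + E" "norm (W - mat 1) \<le> 2 * norm E"
proof -
  define e where "e = norm E"
  have e0: "e \<ge> 0" by (simp add: e_def)
  define T where "T Y = E - Kop d Y ** transpose (Kop d Y)" for Y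
  define s where "s = cball (0::complex^'n^'n) (2 * e)"
  have Tball: "T Y \<in> s" if "Y \<in> s" for Y
  proof -
    have nY: "norm Y \<le> 2 * e" using that by (simp add: s_def)
    have nK: "norm (Kop d Y) \<le> 2 * e" using Kop_norm[of d Y, OF dpos] nY by linarith
    have "norm (T Y) \<le> norm E + norm (Kop d Y ** transpose (Kop d Y))"
      unfolding T_def by (rule norm_triangle_ineq4)
    also have "\<dots> \<le> e + norm (Kop d Y) * norm (Kop d Y)"
      using norm_mm_le[of "Kop d Y" "transpose (Kop d Y)"] by (simp add: norm_transpose_c e_def)
    also have "\<dots> \<le> e + (2 * e) * (2 * e)"
      using mult_mono[OF nK nK] e0 by simp
    also have "\<dots> \<le> 2 * e"
    proof -
      have "e * e \<le> e * (1/8)" using Esmall e0 by (intro mult_left_mono) (simp_all add: e_def)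
      moreover have "2*e*(2*e) = 4*(e*e)" by simp ultimately show ?thesis using e0 by linarith
    qed
    finally show ?thesis by (simp add: s_def)
  qed
  have Tlip: "dist (T Y1) (T Y2) \<le> (1/2) * dist Y1 Y2" if "Y1 \<in> s" "Y2 \<in> s" for Y1 Y2
  proof -
    define K1 where "K1 = Kop d Y1"
    define K2 where "K2 = Kop d Y2"
    have n1: "norm K1 \<le> 2 * e" using Kop_norm[of d Y1, OF dpos] that by (simp add: s_def K1_def)
    have n2: "norm K2 \<le> 2 * e" using Kop_norm[of d Y2, OF dpos] that by (simp add: s_def K2_def)
    have nD: "norm (K1 - K2) \<le> norm (Y1 - Y2)"
      unfolding K1_def K2_def Kop_diff by (rule Kop_norm[of d, OF dpos])
    have "T Y1 - T Y2 = - ((K1 - K2) ** transpose K1 + K2 ** transpose (K1 - K2))"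
      unfolding T_def K1_def[symmetric] K2_def[symmetric]
      by (simp add: mm_diff_r mm_diff_l transpose_diff)
    then have "dist (T Y1) (T Y2) = norm ((K1 - K2) ** transpose K1 + K2 ** transpose (K1 - K2))"
      by (simp only: dist_norm norm_minus_cancel)
    also have "\<dots> \<le> norm (K1 - K2) * norm K1 + norm K2 * norm (K1 - K2)"
      by (rule order_trans[OF norm_triangle_ineq])
         (metis add_mono norm_mm_le norm_transpose_c)
    also have "\<dots> \<le> norm (Y1 - Y2) * (2 * e) + (2 * e) * norm (Y1 - Y2)"
      by (intro add_mono mult_mono) (use nD n1 n2 e0 in auto)
    also have "\<dots> = (4 * e) * dist Y1 Y2" by (simp add: dist_norm algebra_simps)
    also have "\<dots> \<le> (1/2) * dist Y1 Y2"
      using Esmall by (intro mult_right_mono) (simp_all add: e_def)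
    finally show ?thesis .
  qed
  have "\<exists>!Y\<in>s. T Y = Y"
  proof (rule Banach_fix[where c="1/2"])
    show "complete s" by (simp add: s_def complete_eq_closed)
    show "s \<noteq> {}" using e0 by (simp add: s_def)
    show "T ` s \<subseteq> s" using Tball by blast
    show "\<And>x y. x \<in> s \<Longrightarrow> y \<in> s \<Longrightarrow> dist (T x) (T y) \<le> (1/2) * dist x y" using Tlip by blast
  qed simp_all
  then obtain Y where Ys: "Y \<in> s" and TY: "T Y = Y" by blast
  define X where "X = Kop d Y"
  have Yeq: "Y = E - X ** transpose X" using TY by (simp add: T_def X_def)
  have Ysym: "transpose Y = Y"
    using Yeq Esym by (metis matrix_transpose_mul transpose_diff transpose_transpose)
  have Yij: "Y $ j $ i = Y $ i $ j" for i j using Ysym by (metis transpose_entry)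
  define W where "W = mat 1 + X"
  have XXT: "X + transpose X = Y"
  proof -
    have "X $ i $ j + X $ j $ i = Y $ i $ j" for i j
    proof -
      have dd: "d i + d j \<noteq> 0" using dpos[of i] dpos[of j] by linarith
      have s: "d j / (d i + d j) + d i / (d j + d i) = 1"
        unfolding add.commute[of "d j" "d i"] add_divide_distrib[symmetric] using dd
        by (simp add: add.commute)
      have "X $ i $ j + X $ j $ i = complex_of_real (d j / (d i + d j) + d i / (d j + d i)) * Y $ i $ j"
        by (simp add: X_def Kop_def Yij distrib_right)
      then show ?thesis using s by simp
    qed
    then show ?thesis by (simp add: vec_eq_iff transpose_entry)
  qed
  have "W ** transpose W = mat 1 + (X + transpose X) + X ** transpose X"
    by (simp add: W_def transpose_add matrix_add_ldistrib mm_add_r algebra_simps)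
  also have "\<dots> = mat 1 + E" using XXT Yeq by simp
  finally have WW: "W ** transpose W = mat 1 + E" .
  have sym: "cplx (diagm d) ** W = transpose (cplx (diagm d) ** W)"
  proof -
    have "(cplx (diagm d) ** W) $ i $ j = (cplx (diagm d) ** W) $ j $ i" for i j
    proof -
      have "complex_of_real (d i) * (d j / (d i + d j)) = complex_of_real (d j) * (d i / (d j + d i))"
        by (simp add: field_simps add.commute)
      then show ?thesis
        by (simp add: cplx_diag_entry W_def X_def Kop_def mat_def Yij distrib_left mult.assoc[symmetric]
            del: of_real_divide of_real_add)
    qed
    then show ?thesis by (simp add: vec_eq_iff transpose_entry)
  qed
  have "norm (W - mat 1) = norm X" by (simp add: W_def)
  also have "\<dots> \<le> norm Y" unfolding X_def by (rule Kop_norm[of d, OF dpos])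
  also have "\<dots> \<le> 2 * norm E" using Ys by (simp add: s_def e_def)
  finally show ?thesis using that sym WW by blast
qed



definition hf :: "complex^'n \<Rightarrow> complex^'n \<Rightarrow> complex" where
  "hf v w = (\<Sum>i\<in>UNIV. cnj (v $ i) * w $ i)"

lemma hf_self: "hf v v = complex_of_real ((norm v)^2)"
proof -
  have "cnj (v $ i) * v $ i = complex_of_real ((cmod (v $ i))^2)" for i
    by (metis complex_norm_square mult.commute)
  then show ?thesis by (simp add: hf_def norm_sq_vec)
qed

lemma hf_bound: "cmod (hf v w) \<le> norm v * norm w"
proof -
  have "(cmod (hf v w))^2 \<le> (\<Sum>k\<in>UNIV. (cmod (cnj (v $ k)))^2) * (\<Sum>k\<in>UNIV. (cmod (w $ k))^2)"
    unfolding hf_def by (rule cmod_sum_prod_le)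
  also have "\<dots> = (norm v * norm w)^2" by (simp add: norm_sq_vec power_mult_distrib)
  finally show ?thesis by (meson mult_nonneg_nonneg norm_ge_zero power2_le_imp_le)
qed

lemma hf_add_right: "hf v (w1 + w2) = hf v w1 + hf v w2"
  by (simp add: hf_def distrib_left sum.distrib)

lemma hf_smult_right: "hf v (c *s w) = c * hf v w"
  by (simp add: hf_def sum_distrib_left mult.left_commute)

lemma cplx_mult: "cplx A ** cplx B = cplx (A ** B)"
  by (simp add: cplx_def matrix_matrix_mult_def vec_eq_iff)

lemma cplx_one: "cplx (mat 1) = mat 1"
  by (simp add: cplx_def mat_def vec_eq_iff)

lemma cplx_transpose: "transpose (cplx A) = cplx (transpose A)"
  by (simp add: cplx_def transpose_def vec_eq_iff)

lemma hf_real_mat: "hf v (cplx G *v u) = hf (cplx (transpose G) *v v) u"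
proof -
  have "hf v (cplx G *v u) = (\<Sum>i\<in>UNIV. \<Sum>k\<in>UNIV. cnj (v $ i) * (complex_of_real (G $ i $ k) * u $ k))"
    by (simp add: hf_def cplx_def matrix_vector_mult_def sum_distrib_left)
  also have "\<dots> = (\<Sum>k\<in>UNIV. \<Sum>i\<in>UNIV. cnj (v $ i) * (complex_of_real (G $ i $ k) * u $ k))"
    by (rule sum.swap)
  also have "\<dots> = hf (cplx (transpose G) *v v) u"
    by (simp add: hf_def cplx_def matrix_vector_mult_def transpose_def sum_distrib_right sum_distrib_left mult_ac)
  finally show ?thesis .
qed

lemma re_pos_form:
  assumes P: "norm (P - mat 1) < 1" and w: "w \<noteq> 0"
  shows "Re (hf w (P *v w)) > 0"
proof -
  have "P *v w = w + (P - mat 1) *v w" by (simp add: matrix_vector_mult_diff_rdistrib)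
  then have e: "hf w (P *v w) = complex_of_real ((norm w)^2) + hf w ((P - mat 1) *v w)"
    by (simp add: hf_add_right hf_self)
  have "\<bar>Re (hf w ((P - mat 1) *v w))\<bar> \<le> norm w * norm ((P - mat 1) *v w)"
    by (rule order_trans[OF abs_Re_le_cmod hf_bound])
  also have "\<dots> \<le> norm w * (norm (P - mat 1) * norm w)"
    by (intro mult_left_mono norm_mv_le) simp
  also have "\<dots> < norm w * (1 * norm w)"
    using P w by (intro mult_strict_left_mono mult_strict_right_mono) auto
  finally have "\<bar>Re (hf w ((P - mat 1) *v w))\<bar> < (norm w)^2" by (simp add: power2_eq_square)
  then show ?thesis using e by simp
qed

lemma real_inv_inj:
  fixes G :: "real^'n^'n"
  assumes "invertible G" "cplx G *v v = 0"
  shows "v = 0"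
proof -
  obtain G' :: "real^'n^'n" where "G' ** G = mat 1" using assms(1) invertible_def by blast
  then have "cplx G' ** cplx G = mat 1" by (simp add: cplx_mult cplx_one)
  then have "(cplx G' ** cplx G) *v v = v" by simp
  then show ?thesis using assms(2) by (metis matrix_vector_mul_assoc matrix_vector_mult_0_right)
qed

lemma eig_M:
  fixes G :: "real^'n^'n"
  assumes G: "invertible G" and P: "norm (P - mat 1) < 1"
    and e: "cmat_eigenvalue (cplx G ** P ** cplx (transpose G)) c"
  shows "Re c > 0"
proof -
  obtain v where v: "v \<noteq> 0" "(cplx G ** P ** cplx (transpose G)) *v v = c *s v"
    using e cmat_eigenvalue_def by blast
  define w where "w = cplx (transpose G) *v v"
  have w0: "w \<noteq> 0"
    using real_inv_inj[OF transpose_invertible[OF G]] v(1) by (auto simp: w_def)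
  have "hf v ((cplx G ** P ** cplx (transpose G)) *v v) = hf w (P *v w)"
    by (simp add: w_def matrix_vector_mul_assoc[symmetric] hf_real_mat)
  then have "c * complex_of_real ((norm v)^2) = hf w (P *v w)"
    using v(2) by (simp add: hf_smult_right hf_self)
  then have "Re (c * complex_of_real ((norm v)^2)) > 0" using re_pos_form[OF P w0] by simp
  then have "Re c * (norm v)^2 > 0" by simp
  then show ?thesis using v(1) by (simp add: zero_less_mult_iff)
qed

lemma cplx_diag_mv: "(cplx (diagm e) *v u) $ i = complex_of_real (e i) * u $ i"
  unfolding cplx_def diagm_def matrix_vector_mult_def
  by (auto simp: if_distrib if_distribR sum.delta'[OF finite] cong: if_cong)

lemma eig_S:
  fixes U :: "real^'n^'n"
  assumes U1: "transpose U ** U = mat 1" and U2: "U ** transpose U = mat 1"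
    and dpos: "\<And>i. d i > 0" and W: "norm (W - mat 1) < 1"
    and e: "cmat_eigenvalue (cplx U ** (cplx (diagm d) ** W) ** cplx (transpose U)) c"
  shows "Re c > 0"
proof -
  obtain v where v: "v \<noteq> 0" "(cplx U ** (cplx (diagm d) ** W) ** cplx (transpose U)) *v v = c *s v"
    using e cmat_eigenvalue_def by blast
  define u where "u = cplx (transpose U) *v v"
  have u0: "u \<noteq> 0"
  proof
    assume "u = 0"
    then have "cplx U *v u = 0" by simp
    moreover have "cplx U *v u = v"
      by (simp add: u_def matrix_vector_mul_assoc cplx_mult U2 cplx_one)
    ultimately show False using v(1) by simp
  qed
  have "cplx (transpose U) *v ((cplx U ** (cplx (diagm d) ** W) ** cplx (transpose U)) *v v)
        = (cplx (diagm d) ** W) *v u"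
  proof -
    have "cplx (transpose U) ** (cplx U ** (cplx (diagm d) ** W) ** cplx (transpose U))
       = (cplx (transpose U) ** cplx U) ** (cplx (diagm d) ** W) ** cplx (transpose U)"
      by (simp only: matrix_mul_assoc)
    also have "\<dots> = (cplx (diagm d) ** W) ** cplx (transpose U)"
      by (simp only: cplx_mult U1 cplx_one matrix_mul_lid)
    finally show ?thesis by (simp add: u_def matrix_vector_mul_assoc)
  qed
  moreover have "cplx (transpose U) *v (c *s v) = c *s u"
    by (simp add: u_def vec_eq_iff matrix_vector_mult_def sum_distrib_left mult_ac)
  ultimately have DW: "(cplx (diagm d) ** W) *v u = c *s u" using v(2) by simp
  define Di where "Di = cplx (diagm (\<lambda>i. 1 / d i))"
  have "Di ** cplx (diagm d) = mat 1"
  proof -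
    have "(\<lambda>i. 1 / d i * d i) = (\<lambda>i. 1)"
    proof (rule ext)
      fix i show "1 / d i * d i = 1" using dpos[of i] by simp
    qed
    then show ?thesis by (simp only: Di_def cplx_mult diagm_mult diagm_one cplx_one)
  qed
  then have Wu: "W *v u = c *s (Di *v u)"
  proof -
    assume DD: "Di ** cplx (diagm d) = mat 1"
    have sm: "M *v (c *s x) = c *s (M *v x)" for M :: "complex^'n^'n" and x
      by (simp add: vec_eq_iff matrix_vector_mult_def sum_distrib_left mult_ac)
    have "Di *v ((cplx (diagm d) ** W) *v u) = ((Di ** cplx (diagm d)) ** W) *v u"
      by (simp only: matrix_vector_mul_assoc matrix_mul_assoc)
    also have "\<dots> = W *v u" by (simp only: DD matrix_mul_lid)
    finally show ?thesis using DW sm by simp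
  qed
  define r where "r = (\<Sum>i\<in>UNIV. (1 / d i) * (cmod (u $ i))^2)"
  have hfD: "hf u (Di *v u) = complex_of_real r"
  proof -
    have pw: "cnj (u $ i) * (complex_of_real (1 / d i) * u $ i) = complex_of_real ((1 / d i) * (cmod (u $ i))^2)" for i
    proof -
      have cz: "cnj (u $ i) * u $ i = complex_of_real ((cmod (u $ i))^2)" by (metis complex_norm_square mult.commute)
      have "cnj (u $ i) * (complex_of_real (1 / d i) * u $ i) = complex_of_real (1 / d i) * (cnj (u $ i) * u $ i)"
        by (simp only: mult.left_commute)
      then show ?thesis by (simp only: cz of_real_mult)
    qed
    show ?thesis unfolding hf_def r_def of_real_sum
      by (rule sum.cong[OF refl]) (simp only: Di_def cplx_diag_mv pw)
  qed
  have rpos: "r > 0"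
  proof -
    obtain i where "u $ i \<noteq> 0" using u0 by (metis vec_eq_iff zero_index)
    then have "(1 / d i) * (cmod (u $ i))^2 > 0" using dpos[of i] by simp
    then show ?thesis unfolding r_def
      by (rule sum_pos2[OF finite UNIV_I]) (simp add: dpos less_imp_le)
  qed
  have "hf u (W *v u) = c * complex_of_real r" using Wu hfD by (simp add: hf_smult_right)
  then have "Re (c * complex_of_real r) > 0" using re_pos_form[OF W u0] by simp
  then have "Re c * r > 0" by simp
  then show ?thesis using rpos by (simp add: zero_less_mult_iff)
qed



lemma mv_bounded_linear: "bounded_linear (\<lambda>x::complex^'n. (A::complex^'n^'n) *v x)"
proof (rule bounded_linear_intro[where K="norm A"])
  show "A *v (x + y) = A *v x + A *v y" for x y by (simp add: matrix_vector_right_distrib)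
  show "A *v (r *\<^sub>R x) = r *\<^sub>R (A *v x)" for r x
    by (simp add: vec_eq_iff matrix_vector_mult_def scaleR_sum_right)
  show "norm (A *v x) \<le> norm x * norm A" for x using norm_mv_le[of A x] by (simp add: mult.commute)
qed

lemma opnorm_le_norm: "opnorm A \<le> norm A"
  unfolding opnorm_def by (rule onorm_le) (rule norm_mv_le)

lemma norm_le_opnorm: "norm (A::complex^'n^'n) \<le> real CARD('n) * opnorm A"
proof -
  have ax: "norm (axis j (1::complex) :: complex^'n) = 1" for j
  proof -
    have "(norm (axis j (1::complex) :: complex^'n))^2 = 1"
      by (simp add: norm_sq_vec axis_def if_distrib[of "\<lambda>x. (cmod x)^2"] sum.delta cong: if_cong)
    then show ?thesis by (simp add: power2_eq_1_iff)
  qed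
  have col: "column j A = A *v axis j 1" for j
    by (simp add: column_def matrix_vector_mult_def axis_def vec_eq_iff if_distrib if_distribR sum.delta cong: if_cong)
  have op0: "opnorm A \<ge> 0" unfolding opnorm_def by (rule onorm_pos_le[OF mv_bounded_linear])
  have "(norm A)^2 = (\<Sum>j\<in>UNIV. (norm (A *v axis j 1))^2)" by (simp add: fro_sq_cols col)
  also have "\<dots> \<le> (\<Sum>j\<in>(UNIV::'n set). (opnorm A)^2)"
  proof (rule sum_mono)
    fix j :: 'n
    have "norm (A *v axis j 1) \<le> opnorm A * norm (axis j (1::complex) :: complex^'n)"
      unfolding opnorm_def by (rule onorm[OF mv_bounded_linear])
    then show "(norm (A *v axis j 1))^2 \<le> (opnorm A)^2" using ax by (simp add: power_mono)
  qed
  also have "\<dots> = real CARD('n) * (opnorm A)^2" by simp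
  also have "\<dots> \<le> (real CARD('n) * opnorm A)^2"
  proof -
    have "real CARD('n) \<le> real CARD('n) ^2" by (simp add: power2_eq_square)
    then show ?thesis by (simp add: power_mult_distrib mult_right_mono)
  qed
  finally show ?thesis using op0 by (simp add: power2_le_iff_abs_le)
qed

lemma norm_cplx_orth:
  assumes "U ** transpose U = (mat 1 :: real^'n^'n)"
  shows "norm (cplx U) = sqrt (real CARD('n))"
proof -
  have "(norm (cplx U))^2 = (\<Sum>i\<in>UNIV. \<Sum>j\<in>UNIV. (U $ i $ j)^2)"
    by (simp add: fro_sq cplx_def)
  also have "\<dots> = (\<Sum>i\<in>(UNIV::'n set). (U ** transpose U) $ i $ i)"
    by (simp add: matrix_matrix_mult_def transpose_def power2_eq_square)
  also have "\<dots> = real CARD('n)" using assms by (simp add: mat_def)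
  finally show ?thesis by (metis norm_ge_zero real_sqrt_unique)
qed

lemma ker_invertible:
  fixes A :: "complex^'n^'n"
  assumes "\<And>v. A *v v = 0 \<Longrightarrow> v = 0"
  shows "A ** matrix_inv A = mat 1" "matrix_inv A ** A = mat 1"
proof -
  have "invertible A" using assms by (simp add: invertible_left_inverse matrix_left_invertible_ker)
  then have "\<exists>A'. A ** A' = mat 1 \<and> A' ** A = mat 1" unfolding invertible_def by blast
  then have "A ** matrix_inv A = mat 1 \<and> matrix_inv A ** A = mat 1"
    unfolding matrix_inv_def by (rule someI_ex)
  then show "A ** matrix_inv A = mat 1" "matrix_inv A ** A = mat 1" by auto
qed

lemma near_id_ker:
  assumes "norm (W - mat 1) < 1" "(W::complex^'n^'n) *v v = 0"
  shows "v = 0"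
proof (rule ccontr)
  assume v: "v \<noteq> 0"
  have "(W - mat 1) *v v = - v" using assms(2) by (simp add: matrix_vector_mult_diff_rdistrib)
  then have "norm v \<le> norm (W - mat 1) * norm v" using norm_mv_le[of "W - mat 1" v] by simp
  also have "\<dots> < 1 * norm v" using assms(1) v by (intro mult_strict_right_mono) auto
  finally show False by simp
qed

lemma inv_near_id:
  fixes W Wi :: "complex^'n^'n"
  assumes WiW: "Wi ** W = mat 1" and a: "norm (W - mat 1) \<le> 1/2"
  shows "norm (Wi - mat 1) \<le> 2 * sqrt (real CARD('n)) * norm (W - mat 1)"
proof -
  define x where "x = norm (Wi - mat 1)"
  define a' where "a' = norm (W - mat 1)"
  have "Wi - mat 1 = - (Wi ** (W - mat 1))" using WiW by (simp add: mm_diff_l)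
  then have "x \<le> norm Wi * a'" unfolding x_def a'_def by (metis norm_minus_cancel norm_mm_le)
  also have "norm Wi \<le> sqrt (real CARD('n)) + x"
    using norm_triangle_ineq[of "Wi - mat 1" "mat 1"] by (simp add: x_def norm_mat1)
  then have "norm Wi * a' \<le> (sqrt (real CARD('n)) + x) * a'" by (simp add: a'_def mult_right_mono)
  finally have "x * (1 - a') \<le> sqrt (real CARD('n)) * a'" by (simp add: algebra_simps)
  moreover have "x * (1/2) \<le> x * (1 - a')"
  proof (rule mult_left_mono)
    show "1/2 \<le> 1 - a'" using a by (simp add: a'_def)
  qed (simp add: x_def)
  ultimately have "x * (1/2) \<le> sqrt (real CARD('n)) * a'" by linarith
  then show ?thesis by (simp add: a'_def x_def)
qed



lemma lcancel: "B ** A = mat 1 \<Longrightarrow> (X ** B) ** A = (X::'a::semiring_1^'n^'m)"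
  by (metis matrix_mul_assoc matrix_mul_rid)

lemma main_part:
  fixes h :: "complex^'n^'n" and \<delta> :: real
  defines "N \<equiv> real CARD('n)"
  assumes dpos: "0 < \<delta>" and dsmall: "N^2 * \<delta> \<le> 1/100" and hE: "h \<in> E_set \<delta>"
  shows "(\<forall>c. cmat_eigenvalue (h ** transpose h) c \<longrightarrow> Re c > 0) \<and>
         (\<exists>Q \<in> SO_set. opnorm (psi h - cplx Q) \<le> 25 * N^5 * \<delta>)"
proof -
  have N1: "N \<ge> 1" by (simp add: N_def)
  have sN0: "sqrt N \<ge> 0" using N1 by simp
  have sNsq: "sqrt N * sqrt N = N" using N1 by simp
  have s1: "1 \<le> sqrt N" using N1 by simp
  have sNN: "sqrt N \<le> N" using mult_right_mono[OF s1 sN0] sNsq by simp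
  have NN: "N \<le> N^2" using N1 by (simp add: power2_eq_square)
  obtain g p where h: "h = cplx g ** p" and dg: "det g > 0" and ip: "invertible p"
    and op: "opnorm (p - mat 1) < \<delta>"
    using hE unfolding E_set_def by blast
  define e where "e = norm (p - mat 1)"
  have e0: "e \<ge> 0" by (simp add: e_def)
  have eN: "e \<le> N * \<delta>"
  proof -
    have "e \<le> N * opnorm (p - mat 1)" unfolding e_def N_def by (rule norm_le_opnorm)
    also have "\<dots> \<le> N * \<delta>" using op N1 by (intro mult_left_mono) auto
    finally show ?thesis .
  qed
  have Nd: "N * \<delta> \<le> N^2 * \<delta>" using NN dpos by (intro mult_right_mono) auto
  have Ne: "N * e \<le> N^2 * \<delta>"
  proof -
    have "N * e \<le> N * (N * \<delta>)" using eN N1 by (intro mult_left_mono) auto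
    then show ?thesis by (simp add: power2_eq_square mult.assoc)
  qed
  have e1: "e \<le> 1/100" using eN Nd dsmall by linarith
  define Pm where "Pm = p ** transpose p"
  have PmI: "Pm - mat 1 = (p - mat 1) ** transpose (p - mat 1) + (p - mat 1) + transpose (p - mat 1)"
    by (simp add: Pm_def transpose_diff mm_diff_l mm_diff_r)
  have nPm: "norm (Pm - mat 1) \<le> 3 * e"
  proof -
    have "norm (Pm - mat 1) \<le> norm ((p - mat 1) ** transpose (p - mat 1)) + norm (p - mat 1) + norm (transpose (p - mat 1))"
      unfolding PmI by (rule order_trans[OF norm_triangle_ineq add_right_mono[OF norm_triangle_ineq]])
    also have "\<dots> \<le> e * e + e + e"
      using norm_mm_le[of "p - mat 1" "transpose (p - mat 1)"] by (simp add: norm_transpose_c e_def)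
    also have "\<dots> \<le> 3 * e" using e0 e1 by (simp add: mult_left_le_one_le)
    finally show ?thesis .
  qed
  have invg: "invertible g" using dg by (simp add: invertible_det_nz)
  have hh: "h ** transpose h = cplx g ** Pm ** cplx (transpose g)"
    by (simp add: h matrix_transpose_mul cplx_transpose Pm_def matrix_mul_assoc)
  have part1: "\<forall>c. cmat_eigenvalue (h ** transpose h) c \<longrightarrow> Re c > 0"
  proof (intro allI impI)
    fix c assume ec: "cmat_eigenvalue (h ** transpose h) c"
    have nP1: "norm (Pm - mat 1) < 1" using nPm e1 by linarith
    show "Re c > 0" by (rule eig_M[OF invg nP1]) (use ec hh in simp)
  qed
  obtain U s Vt where U1: "transpose U ** (U::real^'n^'n) = mat 1" and U2: "U ** transpose U = mat 1"
    and V1: "Vt ** transpose (Vt::real^'n^'n) = mat 1" and V2: "transpose Vt ** Vt = mat 1"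
    and spos: "\<And>j. s j > 0" and gsvd: "g = U ** diagm s ** Vt"
    by (rule svd[OF invg]) (rule that)
  define cU where "cU = cplx U"
  define cUt where "cUt = cplx (transpose U)"
  define cV where "cV = cplx Vt"
  define cVt where "cVt = cplx (transpose Vt)"
  define D where "D = cplx (diagm s)"
  have cUU: "cUt ** cU = mat 1" by (simp add: cU_def cUt_def cplx_mult U1 cplx_one)
  have cVV: "cV ** cVt = mat 1" by (simp add: cV_def cVt_def cplx_mult V1 cplx_one)
  have cg: "cplx g = cU ** D ** cV" by (simp add: gsvd cU_def D_def cV_def cplx_mult)
  have cgt: "cplx (transpose g) = cVt ** D ** cUt"
    by (simp add: gsvd cUt_def D_def cVt_def cplx_mult matrix_transpose_mul matrix_mul_assoc)
  have tD: "transpose D = D" by (simp add: D_def cplx_transpose)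
  define Phat where "Phat = cV ** Pm ** cVt"
  define E where "E = Phat - mat 1"
  have Eeq: "E = cV ** (Pm - mat 1) ** cVt"
    by (simp add: E_def Phat_def mm_diff_l mm_diff_r cVV)
  have ncV: "norm cV = sqrt N" unfolding cV_def N_def by (rule norm_cplx_orth[OF V1])
  have ncVt: "norm cVt = sqrt N" unfolding cVt_def N_def by (rule norm_cplx_orth) (simp add: V2)
  have ncU: "norm cU = sqrt N" unfolding cU_def N_def by (rule norm_cplx_orth[OF U2])
  have nE: "norm E \<le> 3 * (N * e)"
  proof -
    have "norm E \<le> norm (cV ** (Pm - mat 1)) * norm cVt" unfolding Eeq by (rule norm_mm_le)
    also have "\<dots> \<le> (norm cV * norm (Pm - mat 1)) * norm cVt"
      by (intro mult_right_mono norm_mm_le) simp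
    also have "\<dots> = N * norm (Pm - mat 1)" using sNsq by (simp add: ncV ncVt mult_ac)
    also have "\<dots> \<le> N * (3 * e)" using nPm N1 by (intro mult_left_mono) auto
    finally show ?thesis by simp
  qed
  have nE8: "norm E \<le> 1/8" using nE Ne dsmall by linarith
  have tPm: "transpose Pm = Pm" by (simp add: Pm_def matrix_transpose_mul)
  have Esym: "transpose E = E"
    by (simp add: E_def Phat_def transpose_diff matrix_transpose_mul tPm cV_def cVt_def cplx_transpose matrix_mul_assoc)
  obtain W where Wsym: "D ** W = transpose (D ** W)" and WW: "W ** transpose W = mat 1 + E"
    and nW: "norm (W - mat 1) \<le> 2 * norm E"
    using fixpt_W[of s E, OF spos Esym nE8] unfolding D_def by blast
  define a where "a = norm (W - mat 1)"
  have a6: "a \<le> 6 * (N^2 * \<delta>)" using nW nE Ne by (simp add: a_def)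
  have a1: "a \<le> 1/2" using a6 dsmall by linarith
  define S where "S = cU ** (D ** W) ** cUt"
  have DWDW: "(D ** W) ** (D ** W) = D ** Phat ** D"
  proof -
    have "(D ** W) ** (D ** W) = (D ** W) ** transpose (D ** W)"
      using arg_cong[OF Wsym, of "\<lambda>X. (D ** W) ** X"] by simp
    also have "\<dots> = D ** (W ** transpose W) ** D"
      by (simp add: matrix_transpose_mul tD matrix_mul_assoc)
    also have "\<dots> = D ** Phat ** D" by (simp add: WW E_def)
    finally show ?thesis .
  qed
  have SS: "S ** S = h ** transpose h"
  proof -
    have "S ** S = cU ** ((D ** W) ** (D ** W)) ** cUt"
      unfolding S_def by (simp add: matrix_mul_assoc lcancel[OF cUU])
    also have "\<dots> = cU ** D ** cV ** Pm ** cVt ** D ** cUt"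
      by (simp only: DWDW) (simp add: Phat_def matrix_mul_assoc)
    also have "\<dots> = h ** transpose h"
      by (simp add: hh cg cgt matrix_mul_assoc)
    finally show ?thesis .
  qed
  have eigS: "\<And>c. cmat_eigenvalue S c \<Longrightarrow> Re c > 0"
    unfolding S_def cU_def cUt_def D_def
    by (rule eig_S[OF U1 U2 spos]) (use a1 in \<open>simp_all add: a_def D_def\<close>)
  have ps: "psqrt (h ** transpose h) = S" by (rule psqrt_eq[OF SS eigS])
  have Sker: "S *v v = 0 \<Longrightarrow> v = 0" for v
  proof (rule ccontr)
    assume "S *v v = 0" "v \<noteq> 0"
    then have "cmat_eigenvalue S 0" unfolding cmat_eigenvalue_def by (intro exI[of _ v]) simp
    then show False using eigS by fastforce
  qed
  have SiS: "matrix_inv S ** S = mat 1" using ker_invertible(2)[OF Sker] .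
  have Wker: "W *v v = 0 \<Longrightarrow> v = 0" for v using near_id_ker[of W v] a1 by (simp add: a_def)
  define Wi where "Wi = matrix_inv W"
  have WWi: "W ** Wi = mat 1" unfolding Wi_def using ker_invertible(1)[OF Wker] .
  have WiW: "Wi ** W = mat 1" unfolding Wi_def using ker_invertible(2)[OF Wker] .
  define Phi where "Phi = cU ** Wi ** cV ** p"
  have SPhi: "S ** Phi = h"
  proof -
    have "S ** Phi = cU ** D ** (W ** Wi) ** cV ** p"
      unfolding S_def Phi_def by (simp add: matrix_mul_assoc lcancel[OF cUU])
    also have "\<dots> = h" by (simp add: WWi h cg)
    finally show ?thesis .
  qed
  have psih: "psi h = Phi"
  proof -
    have "psi h = matrix_inv S ** (S ** Phi)" by (simp add: psi_def ps SPhi)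
    also have "\<dots> = Phi" by (simp add: matrix_mul_assoc SiS)
    finally show ?thesis .
  qed
  define Q where "Q = U ** Vt"
  have QSO: "Q \<in> SO_set"
  proof -
    have "transpose Q ** Q = transpose Vt ** (transpose U ** U) ** Vt"
      by (simp add: Q_def matrix_transpose_mul matrix_mul_assoc)
    then have QQ: "transpose Q ** Q = mat 1" by (simp add: U1 V2)
    have oU: "orthogonal_matrix U" using U1 U2 by (simp add: orthogonal_matrix_def)
    have oV: "orthogonal_matrix Vt" using V1 V2 by (simp add: orthogonal_matrix_def)
    have dD: "det (diagm s) > 0"
    proof -
      have "det (diagm s) = prod s UNIV" by (subst det_diagonal) (simp_all add: diagm_def)
      then show ?thesis using spos by (simp add: prod_pos)
    qed
    have "det g = det U * det (diagm s) * det Vt" by (simp add: gsvd det_mul)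
    then have "det U * det Vt > 0" using dg dD
      by (metis mult.commute mult.left_commute zero_less_mult_pos)
    moreover have "det U = 1 \<or> det U = -1" by (rule det_orthogonal_matrix[OF oU])
    moreover have "det Vt = 1 \<or> det Vt = -1" by (rule det_orthogonal_matrix[OF oV])
    ultimately have "det Q = 1" by (auto simp: Q_def det_mul)
    then show ?thesis using QQ by (simp add: SO_set_def)
  qed
  have cQ: "cplx Q = cU ** cV" by (simp add: Q_def cU_def cV_def cplx_mult)
  have diff: "psi h - cplx Q = cU ** (Wi - mat 1) ** cV ** p + cU ** cV ** (p - mat 1)"
    by (simp add: psih Phi_def cQ mm_diff_l mm_diff_r matrix_mul_assoc)
  define x where "x = norm (Wi - mat 1)"
  have x: "x \<le> 2 * sqrt N * a" unfolding x_def a_def N_def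
    by (rule inv_near_id[OF WiW]) (use a1 in \<open>simp add: a_def\<close>)
  have np: "norm p \<le> 2 * N"
  proof -
    have "norm p \<le> norm (p - mat 1) + norm (mat 1 :: complex^'n^'n)"
      by (metis diff_add_cancel norm_triangle_ineq)
    also have "\<dots> = e + sqrt N" by (simp add: e_def norm_mat1 N_def)
    finally show ?thesis using e1 sNN N1 by linarith
  qed
  have t1: "norm (cU ** (Wi - mat 1) ** cV ** p) \<le> N * x * norm p"
  proof -
    have "norm (cU ** (Wi - mat 1) ** cV ** p) \<le> norm cU * x * norm cV * norm p"
      unfolding x_def
      by (meson mult_right_mono norm_ge_zero norm_mm_le order_trans mult_left_mono)
    also have "\<dots> = N * x * norm p" using sNsq by (simp add: ncU ncV mult_ac)
    finally show ?thesis .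
  qed
  have t2: "norm (cU ** cV ** (p - mat 1)) \<le> N * e"
  proof -
    have "norm (cU ** cV ** (p - mat 1)) \<le> norm cU * norm cV * e"
      unfolding e_def by (meson mult_right_mono norm_ge_zero norm_mm_le order_trans)
    then show ?thesis using sNsq by (simp add: ncU ncV)
  qed
  have x0: "x \<ge> 0" by (simp add: x_def)
  have a0: "a \<ge> 0" by (simp add: a_def)
  have "N * x * norm p \<le> N * (2 * N * a) * (2 * N)"
  proof -
    have "2 * sqrt N * a \<le> 2 * N * a" using sNN a0 by (simp add: mult_right_mono)
    then have "x \<le> 2 * N * a" using x by linarith
    then show ?thesis using N1 np x0 by (intro mult_mono) auto
  qed
  also have "\<dots> = 4 * N^3 * a" by (simp add: power3_eq_cube)
  also have "\<dots> \<le> 4 * N^3 * (6 * (N^2 * \<delta>))" using a6 N1 by (intro mult_left_mono) auto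
  also have "\<dots> = 24 * N^5 * \<delta>" by (simp add: power_add[symmetric] algebra_simps)
  finally have b1: "N * x * norm p \<le> 24 * N^5 * \<delta>" .
  have b2: "N * e \<le> N^5 * \<delta>"
  proof -
    have "N^2 \<le> N^5" using N1 by (intro power_increasing) auto
    then have "N^2 * \<delta> \<le> N^5 * \<delta>" using dpos by (intro mult_right_mono) auto
    then show ?thesis using Ne by linarith
  qed
  have "opnorm (psi h - cplx Q) \<le> norm (psi h - cplx Q)" by (rule opnorm_le_norm)
  also have "\<dots> \<le> norm (cU ** (Wi - mat 1) ** cV ** p) + norm (cU ** cV ** (p - mat 1))"
    unfolding diff by (rule norm_triangle_ineq)
  also have "\<dots> \<le> 25 * N^5 * \<delta>" using t1 t2 b1 b2 by linarith
  finally show ?thesis using part1 QSO by blast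
qed


theorem proposition8p2:
  shows "\<exists>C>0. \<exists>\<delta>0>0. \<forall>\<delta>. 0 < \<delta> \<and> \<delta> < \<delta>0 \<longrightarrow>
     (\<forall>h \<in> (E_set \<delta> :: 'n::finite cmat set).
        (\<forall>c. cmat_eigenvalue (h ** transpose h) c \<longrightarrow> Re c > 0) \<and>
        (\<exists>Q \<in> SO_set. opnorm (psi h - cplx Q) \<le> C * \<delta>))"
proof -
  define N where "N = real CARD('n)"
  have N1: "N \<ge> 1" by (simp add: N_def)
  have N2: "N^2 > 0" using N1 by simp
  have Cpos: "25 * N^5 > 0" using N1 by simp
  have d0pos: "1 / (100 * N^2) > 0" using N2 by simp
  have main: "(\<forall>c. cmat_eigenvalue (h ** transpose h) c \<longrightarrow> Re c > 0) \<and>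
        (\<exists>Q \<in> SO_set. opnorm (psi h - cplx Q) \<le> 25 * N^5 * \<delta>)"
    if d: "0 < \<delta>" "\<delta> < 1 / (100 * N^2)" and hE: "h \<in> (E_set \<delta> :: 'n::finite cmat set)" for \<delta> h
  proof -
    have "N^2 * \<delta> \<le> N^2 * (1 / (100 * N^2))" using d N2 by (intro mult_left_mono) auto
    also have "\<dots> = 1/100" using N2 by simp
    finally have ds: "N^2 * \<delta> \<le> 1/100" .
    show ?thesis using main_part[OF d(1) _ hE] ds unfolding N_def by blast
  qed
  show ?thesis
    by (rule exI[of _ "25 * N^5"], rule conjI[OF Cpos], rule exI[of _ "1 / (100 * N^2)"],
        rule conjI[OF d0pos]) (use main in blast)
qed

end
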